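(* Let $m>2$ be an odd integer, $n\ge 1$ an integer, and let $M_{2mn}=\langle a,b : a^m=b^{2n}=1,\ bab^{-1}=a^{-1}\rangle$ be the metacyclic group of order $2mn$. Let $\Gamma_{M_{2mn}}$ be its non-commuting graph. Then the spectrum of the distance Laplacian matrix $D^L(\Gamma_{M_{2mn}})$ (eigenvalues counted with multiplicity, multiplicities being added if two of the listed values coincide) consists of: (a) $0$ with multiplicity $1$; (b) $n(2m-1)$ with multiplicity $m$; (c) $2mn$ with multiplicity $m(n-1)$; (d) $(3m-2)n$ with multiplicity $(m-1)n-1$.
   Context: For a finite non-abelian group $G$ with centre $Z(G)$, the non-commuting graph $\Gamma_G$ is the simple undirected graph with vertex set $G\setminus Z(G)$, in which two distinct vertices $u,v$ are adjacent if and only if $uv\ne vu$. For a connected graph $H$, $d_{uv}$ denotes the length of a shortest path between $u$ and $v$; the distance matrix $D(H)$ has $(u,v)$-entry $d_{uv}$. The transmission of a vertex $v$ is $\sum_{u} d_{uv}$, and $Tr(H)$ is the diagonal matrix of vertex transmissions. The distance Laplacian matrix is $D^L(H)=Tr(H)-D(H)$. *)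

theory Defs
  imports "HOL-Algebra.Generated_Groups" "Jordan_Normal_Form.Determinant"
    "Jordan_Normal_Form.Char_Poly"
begin

definition group_centre :: "('a, 'b) monoid_scheme \<Rightarrow> 'a set" where
  "group_centre G = {z \<in> carrier G. \<forall>g \<in> carrier G. z \<otimes>\<^bsub>G\<^esub> g = g \<otimes>\<^bsub>G\<^esub> z}"

definition nc_vertices :: "('a, 'b) monoid_scheme \<Rightarrow> 'a set" where
  "nc_vertices G = carrier G - group_centre G"

definition nc_adj :: "('a, 'b) monoid_scheme \<Rightarrow> 'a \<Rightarrow> 'a \<Rightarrow> bool" where
  "nc_adj G u v \<longleftrightarrow> u \<in> nc_vertices G \<and> v \<in> nc_vertices G \<and> u \<noteq> v
     \<and> u \<otimes>\<^bsub>G\<^esub> v \<noteq> v \<otimes>\<^bsub>G\<^esub> u"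

fun walk_of_len :: "('a \<Rightarrow> 'a \<Rightarrow> bool) \<Rightarrow> nat \<Rightarrow> 'a \<Rightarrow> 'a \<Rightarrow> bool" where
  "walk_of_len E 0 u v = (u = v)"
| "walk_of_len E (Suc k) u v = (\<exists>w. E u w \<and> walk_of_len E k w v)"

text \<open>Graph distance: length of a shortest path (the graph is assumed connected).\<close>
definition graph_dist :: "('a \<Rightarrow> 'a \<Rightarrow> bool) \<Rightarrow> 'a \<Rightarrow> 'a \<Rightarrow> nat" where
  "graph_dist E u v = (LEAST k. walk_of_len E k u v)"

definition dist_laplacian :: "'a set \<Rightarrow> ('a \<Rightarrow> 'a \<Rightarrow> bool) \<Rightarrow> 'a \<Rightarrow> 'a \<Rightarrow> real" where
  "dist_laplacian V E u v =
     (if u = v then (\<Sum>w\<in>V. real (graph_dist E u w)) else 0) - real (graph_dist E u v)"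

definition dist_laplacian_mat :: "'a set \<Rightarrow> ('a \<Rightarrow> 'a \<Rightarrow> bool) \<Rightarrow> (nat \<Rightarrow> 'a) \<Rightarrow> real mat" where
  "dist_laplacian_mat V E e = mat (card V) (card V) (\<lambda>(i, j). dist_laplacian V E (e i) (e j))"

end

theory Submission imports Defs begin

lemma prod_list_map_upt_eq: "prod_list (map f [0..<n]) = (\<Prod>i<n. f i)"
  by (induction n) auto

lemma spectrum_multipartite:
  fixes V :: "'a set" and c :: "'a \<Rightarrow> 'k" and \<rho> :: "'k \<Rightarrow> 'a" and u0 :: 'a
    and e :: "nat \<Rightarrow> 'a" and L :: "'a \<Rightarrow> 'a \<Rightarrow> real" and p :: "'k \<Rightarrow> nat" and N :: nat
  assumes fin: "finite V" and e: "bij_betw e {..<N} V" and N: "N = card V"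
    and rho: "\<And>u. u \<in> V \<Longrightarrow> \<rho> (c u) \<in> V \<and> c (\<rho> (c u)) = c u"
    and u0: "u0 \<in> V" "\<rho> (c u0) = u0"
    and p: "\<And>k. p k = card {w\<in>V. c w = k}"
    and L: "\<And>u v. u \<in> V \<Longrightarrow> v \<in> V \<Longrightarrow> L u v =
        (if u = v then real N + real (p (c u)) else 0) - 1 - (if c u = c v then 1 else 0)"
  shows "char_poly (mat N N (\<lambda>(i,j). L (e i) (e j)))
     = (\<Prod>u\<in>V. [:- (if u = u0 then 0 else if u = \<rho> (c u) then real N else real N + real (p (c u))), 1:])"
proof -
  define k0 where "k0 = c u0"
  define ind :: "'k \<Rightarrow> 'a \<Rightarrow> real" where "ind k w = (if c w = k then 1 else 0)" for k w
  define del :: "'a \<Rightarrow> 'a \<Rightarrow> real" where "del t w = (if w = t then 1 else 0)" for t w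
  define pr :: "'k \<Rightarrow> real" where "pr k = real (p k)" for k
  define col where "col t w = (if t = u0 then 1 else if t = \<rho> (c t) then ind (c t) w / pr (c t) - ind k0 w / pr k0
      else del t w - del (\<rho> (c t)) w)" for t w
  define row where "row t w = (if t = u0 then 1 / real N else if t = \<rho> (c t) then ind (c t) w - pr (c t) / real N
      else del t w - ind (c t) w / pr (c t))" for t w
  define lam where "lam u = (if u = u0 then 0 else if u = \<rho> (c u) then real N else real N + real (p (c u)))" for u
  have Npos: "real N > 0" using u0 fin N card_gt_0_iff by fastforce
  have ppos: "pr (c u) > 0" if "u \<in> V" for u
  proof -
    have "u \<in> {w\<in>V. c w = c u}" using that by auto
    hence "card {w\<in>V. c w = c u} > 0" using fin by (metis (no_types, lifting) card_gt_0_iff empty_iff finite_subset mem_Collect_eq subsetI)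
    thus ?thesis unfolding pr_def p by simp
  qed
  have sum_ind: "(\<Sum>w\<in>V. ind k w) = pr k" for k
    unfolding ind_def pr_def p using fin by (simp add: sum.If_cases Int_def)
  have sum_ind_ind: "(\<Sum>w\<in>V. ind k w * ind k' w) = (if k = k' then pr k else 0)" for k k'
  proof -
    have "(\<Sum>w\<in>V. ind k w * ind k' w) = (\<Sum>w\<in>V. if k = k' then ind k w else 0)"
      by (rule sum.cong) (auto simp: ind_def)
    thus ?thesis using sum_ind by simp
  qed
  have sum_del: "(\<Sum>w\<in>V. del t w * f w) = f t" if "t \<in> V" for t f
    unfolding del_def using fin that by (simp add: if_distrib[where f="\<lambda>x. x * _"] cong: if_cong)
  have sum_del': "(\<Sum>w\<in>V. del t w) = 1" if "t \<in> V" for t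
    using sum_del[OF that, of "\<lambda>_. 1"] by simp
  have Lsum: "(\<Sum>w\<in>V. L u w * f w) = (real N + pr (c u)) * f u - (\<Sum>w\<in>V. f w) - (\<Sum>w\<in>V. ind (c u) w * f w)"
    if "u \<in> V" for u f
  proof -
    have "(\<Sum>w\<in>V. L u w * f w) = (\<Sum>w\<in>V. (real N + pr (c u)) * (del u w * f w) - f w - ind (c u) w * f w)"
      by (rule sum.cong) (auto simp: L that del_def ind_def pr_def algebra_simps)
    also have "\<dots> = (real N + pr (c u)) * f u - (\<Sum>w\<in>V. f w) - (\<Sum>w\<in>V. ind (c u) w * f w)"
      by (simp add: sum_subtractf sum_distrib_left[symmetric] sum_del that)
    finally show ?thesis .
  qed

  have rep_ne: "c t \<noteq> k0" if "t \<in> V" "t = \<rho> (c t)" "t \<noteq> u0" for t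
    using that u0 unfolding k0_def by metis
  have sum_col: "(\<Sum>w\<in>V. col s w) = (if s = u0 then real N else 0)" if "s \<in> V" for s
  proof -
    have one: "(\<Sum>w\<in>V. ind k w / pr k) = 1" if "pr k > 0" for k
      using that by (simp add: sum_divide_distrib[symmetric] sum_ind)
    consider "s = u0" | "s \<noteq> u0" "s = \<rho> (c s)" | "s \<noteq> u0" "s \<noteq> \<rho> (c s)" by blast
    then show ?thesis
    proof cases
      case 1 then show ?thesis using N by (simp add: col_def)
    next
      case 2
      have "(\<Sum>w\<in>V. col s w) = (\<Sum>w\<in>V. ind (c s) w / pr (c s) - ind k0 w / pr k0)"
        by (rule sum.cong) (use 2 in \<open>auto simp: col_def\<close>)
      also have "\<dots> = 0" using one ppos[OF that] ppos[OF u0(1)] by (simp add: sum_subtractf k0_def)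
      finally show ?thesis using 2 by simp
    next
      case 3
      have "(\<Sum>w\<in>V. col s w) = (\<Sum>w\<in>V. del s w - del (\<rho> (c s)) w)"
        by (rule sum.cong) (use 3 in \<open>auto simp: col_def\<close>)
      also have "\<dots> = 0" using sum_del' that rho[OF that] by (simp add: sum_subtractf)
      finally show ?thesis using 3 by simp
    qed
  qed
  have sum_ind_col: "(\<Sum>w\<in>V. ind k w * col s w) = (if s = u0 then pr k else if s = \<rho> (c s) then
       (if k = c s then 1 else 0) - (if k = k0 then 1 else 0) else 0)" if "s \<in> V" for s k
  proof -
    consider "s = u0" | "s \<noteq> u0" "s = \<rho> (c s)" | "s \<noteq> u0" "s \<noteq> \<rho> (c s)" by blast
    then show ?thesis
    proof cases
      case 1 then show ?thesis using sum_ind by (simp add: col_def)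
    next
      case 2
      have "(\<Sum>w\<in>V. ind k w * col s w) = (\<Sum>w\<in>V. ind k w * ind (c s) w) / pr (c s) - (\<Sum>w\<in>V. ind k w * ind k0 w) / pr k0"
        unfolding sum_divide_distrib sum_subtractf[symmetric]
        by (rule sum.cong) (use 2 in \<open>auto simp: col_def right_diff_distrib\<close>)
      also have "\<dots> = (if k = c s then 1 else 0) - (if k = k0 then 1 else 0)"
        unfolding sum_ind_ind using ppos[OF that] ppos[OF u0(1)] unfolding k0_def by simp
      finally show ?thesis using 2 by simp
    next
      case 3
      have "(\<Sum>w\<in>V. ind k w * col s w) = (\<Sum>w\<in>V. del s w * ind k w) - (\<Sum>w\<in>V. del (\<rho> (c s)) w * ind k w)"
        unfolding sum_subtractf[symmetric]
        by (rule sum.cong) (use 3 in \<open>auto simp: col_def algebra_simps\<close>)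
      also have "\<dots> = 0" using sum_del that rho[OF that] by (simp add: ind_def)
      finally show ?thesis using 3 by simp
    qed
  qed
  have K1: "(\<Sum>w\<in>V. L u w * col t w) = col t u * lam t" if "u \<in> V" "t \<in> V" for u t
  proof -
    have E: "(\<Sum>w\<in>V. L u w * col t w) = (real N + pr (c u)) * col t u - (\<Sum>w\<in>V. col t w) - (\<Sum>w\<in>V. ind (c u) w * col t w)"
      by (rule Lsum[OF that(1)])
    consider "t = u0" | "t \<noteq> u0" "t = \<rho> (c t)" | "t \<noteq> u0" "t \<noteq> \<rho> (c t)" by blast
    then show ?thesis
    proof cases
      case 1 then show ?thesis unfolding E sum_col[OF that(2)] sum_ind_col[OF that(2)]
        by (simp add: col_def lam_def)
    next
      case 2
      have ne: "c t \<noteq> k0" using rep_ne[OF that(2) 2(2) 2(1)] .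
      have "pr (c u) * col t u = (if c u = c t then 1 else 0) - (if c u = k0 then 1 else 0)"
        using ne 2 ppos[OF that(1)] by (auto simp: col_def ind_def)
      then show ?thesis unfolding E sum_col[OF that(2)] sum_ind_col[OF that(2)]
        using 2 by (simp add: lam_def algebra_simps)
    next
      case 3
      have "pr (c u) * col t u = col t u * real (p (c t))"
        using 3 rho[OF that(2)] by (auto simp: col_def del_def pr_def)
      then show ?thesis unfolding E sum_col[OF that(2)] sum_ind_col[OF that(2)]
        using 3 by (simp add: lam_def algebra_simps)
    qed
  qed
  have K2: "(\<Sum>w\<in>V. row t w * col s w) = (if t = s then 1 else 0)" if "t \<in> V" "s \<in> V" for t s
  proof -
    note sc = sum_col[OF that(2)] and sic = sum_ind_col[OF that(2)]
    consider "t = u0" | "t \<noteq> u0" "t = \<rho> (c t)" | "t \<noteq> u0" "t \<noteq> \<rho> (c t)" by blast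
    then show ?thesis
    proof cases
      case 1
      have "(\<Sum>w\<in>V. row t w * col s w) = (\<Sum>w\<in>V. col s w) / real N"
        using 1 by (simp add: row_def sum_divide_distrib)
      then show ?thesis unfolding sc using Npos 1 by auto
    next
      case 2
      have "(\<Sum>w\<in>V. row t w * col s w) = (\<Sum>w\<in>V. ind (c t) w * col s w) - pr (c t) / real N * (\<Sum>w\<in>V. col s w)"
        using 2 by (simp add: row_def sum_subtractf sum_distrib_left left_diff_distrib)
      moreover have "c t \<noteq> k0" using rep_ne[OF that(1) 2(2) 2(1)] .
      moreover have "s = \<rho> (c s) \<Longrightarrow> c t = c s \<Longrightarrow> t = s" using 2 by metis
      ultimately show ?thesis unfolding sc sic using 2 Npos by auto
    next
      case 3
      have "(\<Sum>w\<in>V. row t w * col s w) = (\<Sum>w\<in>V. del t w * col s w) - (\<Sum>w\<in>V. ind (c t) w * col s w) / pr (c t)"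
        using 3 by (simp add: row_def sum_subtractf sum_divide_distrib left_diff_distrib)
      also have "\<dots> = col s t - (\<Sum>w\<in>V. ind (c t) w * col s w) / pr (c t)"
        using sum_del[OF that(1)] by simp
      finally have E: "(\<Sum>w\<in>V. row t w * col s w) = col s t - (\<Sum>w\<in>V. ind (c t) w * col s w) / pr (c t)" .
      have np: "t \<noteq> \<rho> (c s)" using 3 rho[OF that(2)] by metis
      show ?thesis unfolding E sic using 3 np ppos[OF that(1)] ppos[OF u0(1)]
        by (auto simp: col_def ind_def del_def k0_def)
    qed
  qed
  have eV: "e i \<in> V" if "i < N" for i using e that by (auto simp: bij_betw_def)
  have einj: "e i = e j \<longleftrightarrow> i = j" if "i < N" "j < N" for i j
    using e that by (auto simp: bij_betw_def inj_on_def)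
  have reidx: "(\<Sum>k<N. g (e k)) = (\<Sum>w\<in>V. g w)" for g :: "'a \<Rightarrow> real"
    using sum.reindex_bij_betw[OF e] .
  define A where "A = mat N N (\<lambda>(i,j). L (e i) (e j))"
  define P where "P = mat N N (\<lambda>(i,j). col (e j) (e i))"
  define Q where "Q = mat N N (\<lambda>(i,j). row (e i) (e j))"
  define T where "T = mat N N (\<lambda>(i,j). if i = j then lam (e i) else 0)"
  have cA: "A \<in> carrier_mat N N" and cP: "P \<in> carrier_mat N N" and cQ: "Q \<in> carrier_mat N N"
    and cT: "T \<in> carrier_mat N N" by (auto simp: A_def P_def Q_def T_def)
  have AP: "A * P = P * T"
  proof (rule eq_matI)
    fix i j assume ij: "i < dim_row (P * T)" "j < dim_col (P * T)"
    hence i: "i < N" and j: "j < N" by (auto simp: P_def T_def)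
    have "(A * P) $$ (i, j) = (\<Sum>k<N. L (e i) (e k) * col (e j) (e k))"
      using i j by (simp add: A_def P_def scalar_prod_def lessThan_atLeast0)
    also have "\<dots> = col (e j) (e i) * lam (e j)"
      using reidx[of "\<lambda>w. L (e i) w * col (e j) w"] K1[OF eV[OF i] eV[OF j]] by simp
    also have "\<dots> = (\<Sum>k<N. col (e k) (e i) * (if k = j then lam (e k) else 0))"
      using j by (simp add: if_distrib[where f="\<lambda>x. _ * x"] cong: if_cong)
    also have "\<dots> = (P * T) $$ (i, j)"
      using i j by (simp add: T_def P_def scalar_prod_def lessThan_atLeast0)
    finally show "(A * P) $$ (i, j) = (P * T) $$ (i, j)" .
  qed (auto simp: A_def P_def T_def)
  have QP: "Q * P = 1\<^sub>m N"
  proof (rule eq_matI)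
    fix i j assume ij: "i < dim_row (1\<^sub>m N :: real mat)" "j < dim_col (1\<^sub>m N :: real mat)"
    hence i: "i < N" and j: "j < N" by auto
    have "(Q * P) $$ (i, j) = (\<Sum>k<N. row (e i) (e k) * col (e j) (e k))"
      using i j by (simp add: Q_def P_def scalar_prod_def lessThan_atLeast0)
    also have "\<dots> = (if e i = e j then 1 else 0)"
      using reidx[of "\<lambda>w. row (e i) w * col (e j) w"] K2[OF eV[OF i] eV[OF j]] by simp
    finally show "(Q * P) $$ (i, j) = 1\<^sub>m N $$ (i, j)" using einj[OF i j] i j by simp
  qed (auto simp: Q_def P_def)
  have PQ: "P * Q = 1\<^sub>m N" by (rule mat_mult_left_right_inverse[OF cQ cP QP])
  have "A = A * (P * Q)" using cA by (simp add: PQ)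
  also have "\<dots> = (A * P) * Q" using cA cP cQ by (simp add: assoc_mult_mat)
  also have "\<dots> = P * T * Q" by (simp add: AP)
  finally have "similar_mat_wit A T P Q"
    by (intro similar_mat_witI[OF PQ QP _ cA cT cP cQ])
  hence "char_poly A = char_poly T" by (intro char_poly_similar) (auto simp: similar_mat_def)
  also have "\<dots> = (\<Prod>a\<leftarrow>diag_mat T. [:- a, 1:])"
    by (rule char_poly_upper_triangular[OF cT]) (auto simp: T_def upper_triangular_def)
  also have "diag_mat T = map (\<lambda>i. lam (e i)) [0..<N]"
    by (rule nth_equalityI) (auto simp: diag_mat_def T_def)
  also have "(\<Prod>a\<leftarrow>map (\<lambda>i. lam (e i)) [0..<N]. [:- a, 1:]) = (\<Prod>i<N. [:- lam (e i), 1:])"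
    by (simp add: prod_list_map_upt_eq[symmetric] comp_def)
  also have "\<dots> = (\<Prod>u\<in>V. [:- lam u, 1:])"
    using prod.reindex_bij_betw[OF e] .
  finally show ?thesis unfolding A_def lam_def .
qed


lemma mod_inner: "(a + b * (c mod d)) mod d = (a + b * c) mod (d::int)"
proof -
  have "(a + b * (c mod d)) mod d = (a + (b * (c mod d)) mod d) mod d" by (rule mod_add_right_eq[symmetric])
  also have "\<dots> = (a + (b * c) mod d) mod d" by (simp only: mod_mult_right_eq)
  also have "\<dots> = (a + b * c) mod d" by (rule mod_add_right_eq)
  finally show ?thesis .
qed

lemma odd_dvd2: fixes m :: nat and x :: int assumes "odd m" shows "int m dvd 2 * x \<longleftrightarrow> int m dvd x"
proof -
  have "coprime (int m) 2" using assms by (simp add: coprime_commute)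
  thus ?thesis using coprime_dvd_mult_right_iff by blast
qed
lemma small_dvd: fixes m :: nat and x :: int assumes "\<bar>x\<bar> < int m" shows "int m dvd x \<longleftrightarrow> x = 0"
  using assms dvd_imp_le_int by force
lemma cm_int: fixes m i k j l :: nat assumes "odd m" "i < m" "k < m"
  shows "(int i + int k * (-1)^j) mod int m = (int k + int i * (-1)^l) mod int m \<longleftrightarrow>
    (if even j \<and> even l then True else if even j then i = 0 else if even l then k = 0 else i = k)"
proof -
  have E: "(x::int) mod int m = y mod int m \<longleftrightarrow> int m dvd (x - y)" for x y by (simp add: mod_eq_dvd_iff)
  consider "even j" "even l" | "even j" "odd l" | "odd j" "even l" | "odd j" "odd l" by blast
  then show ?thesis
  proof cases
    case 1 then show ?thesis by (simp add: add.commute)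
  next
    case 2
    have "int m dvd (int i + int k - (int k - int i)) \<longleftrightarrow> int m dvd 2 * int i" by (simp add: algebra_simps)
    also have "\<dots> \<longleftrightarrow> int m dvd int i" by (rule odd_dvd2[OF assms(1)])
    also have "\<dots> \<longleftrightarrow> int i = 0" by (rule small_dvd) (use assms in simp)
    also have "\<dots> \<longleftrightarrow> i = 0" by simp
    finally show ?thesis using 2 by (simp add: E)
  next
    case 3
    have "int m dvd (int i - int k - (int k + int i)) \<longleftrightarrow> int m dvd 2 * int k"
    proof -
      have "int i - int k - (int k + int i) = - (2 * int k)" by simp
      thus ?thesis by (simp only: dvd_minus_iff)
    qed
    also have "\<dots> \<longleftrightarrow> int m dvd int k" by (rule odd_dvd2[OF assms(1)])
    also have "\<dots> \<longleftrightarrow> int k = 0" by (rule small_dvd) (use assms in simp)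
    also have "\<dots> \<longleftrightarrow> k = 0" by simp
    finally show ?thesis using 3 by (simp add: E)
  next
    case 4
    have "int m dvd (int i - int k - (int k - int i)) \<longleftrightarrow> int m dvd 2 * (int i - int k)" by (simp add: algebra_simps)
    also have "\<dots> \<longleftrightarrow> int m dvd (int i - int k)" by (rule odd_dvd2[OF assms(1)])
    also have "\<dots> \<longleftrightarrow> int i - int k = 0" by (rule small_dvd) (use assms in linarith)
    also have "\<dots> \<longleftrightarrow> i = k" by simp
    finally show ?thesis using 4 by (simp add: E)
  qed
qed

lemma walk1: "walk_of_len E (Suc 0) u v \<longleftrightarrow> E u v" by simp

lemma gd_0: "graph_dist E u u = 0"
  unfolding graph_dist_def by (rule Least_eq_0) simp

lemma gd_1: assumes "E u v" "u \<noteq> v" shows "graph_dist E u v = 1"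
  unfolding graph_dist_def
proof (rule Least_equality)
  show "walk_of_len E 1 u v" using assms by simp
  fix y assume "walk_of_len E y u v"
  thus "1 \<le> y" using assms by (cases y) auto
qed

lemma gd_2: assumes "u \<noteq> v" "\<not> E u v" "E u w" "E w v" shows "graph_dist E u v = 2"
  unfolding graph_dist_def
proof (rule Least_equality)
  show "walk_of_len E 2 u v" using assms by (auto simp: numeral_2_eq_2)
  fix y assume "walk_of_len E y u v"
  thus "2 \<le> y" using assms
  proof (cases y)
    case (Suc y') then show ?thesis using assms \<open>walk_of_len E y u v\<close> by (cases y') auto
  qed auto
qed


locale metacyc = group G for G (structure) +
  fixes a b :: 'g and m n :: nat
  assumes m_odd: "odd m" and m_gt: "m > 2" and n_ge: "n \<ge> 1"
    and a_in: "a \<in> carrier G" and b_in: "b \<in> carrier G"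
    and am: "a [^] m = \<one>" and bn: "b [^] (2 * n) = \<one>"
    and rel: "b \<otimes> a \<otimes> inv b = inv a"
    and gen: "generate G {a, b} = carrier G"
    and fin: "finite (carrier G)" and cardG: "card (carrier G) = 2 * m * n"
begin

definition phi :: "nat \<Rightarrow> nat \<Rightarrow> 'g" where "phi i j = a [^] i \<otimes> b [^] j"

lemma phi_in[simp]: "phi i j \<in> carrier G"
  by (simp add: phi_def a_in b_in)

lemma pow_mod_gen: fixes q i :: nat assumes "x \<in> carrier G" "x [^] q = \<one>" shows "x [^] i = x [^] (i mod q)"
proof -
  have "x [^] i = x [^] (q * (i div q) + i mod q)" by (metis mult_div_mod_eq)
  also have "\<dots> = (x [^] q) [^] (i div q) \<otimes> x [^] (i mod q)"
    using assms(1) by (simp add: nat_pow_mult nat_pow_pow)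
  also have "\<dots> = x [^] (i mod q)" using assms by simp
  finally show ?thesis .
qed

lemma inv_a: "inv a = a [^] (m - 1)"
proof (rule inv_equality)
  have e: "Suc (m - 1) = m" using m_gt by simp
  have "a [^] (m - 1) \<otimes> a = a [^] Suc (m - 1)" by (simp only: nat_pow_Suc)
  also have "\<dots> = a [^] m" by (simp only: e)
  finally show "a [^] (m - 1) \<otimes> a = \<one>" using am by simp
qed (auto simp: a_in)

lemma inv_b: "inv b = b [^] (2 * n - 1)"
proof (rule inv_equality)
  have e: "Suc (2 * n - 1) = 2 * n" using n_ge by simp
  have "b [^] (2 * n - 1) \<otimes> b = b [^] Suc (2 * n - 1)" by (simp only: nat_pow_Suc)
  also have "\<dots> = b [^] (2 * n)" by (simp only: e)
  finally show "b [^] (2 * n - 1) \<otimes> b = \<one>" using bn by simp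
qed (auto simp: b_in)

lemma ba: "b \<otimes> a = a [^] (m - 1) \<otimes> b"
proof -
  have "b \<otimes> a = b \<otimes> a \<otimes> inv b \<otimes> b" using a_in b_in by (simp add: m_assoc)
  also have "\<dots> = a [^] (m - 1) \<otimes> b" using rel inv_a by simp
  finally show ?thesis .
qed

lemma bak: "b \<otimes> a [^] k = a [^] (k * (m - 1)) \<otimes> b"
proof (induction k)
  case 0 then show ?case using b_in by simp
next
  case (Suc k)
  have "b \<otimes> a [^] Suc k = (b \<otimes> a [^] k) \<otimes> a" using a_in b_in by (simp add: m_assoc)
  also have "\<dots> = a [^] (k * (m - 1)) \<otimes> (b \<otimes> a)" using Suc a_in b_in by (simp add: m_assoc)
  also have "\<dots> = a [^] (k * (m - 1)) \<otimes> a [^] (m - 1) \<otimes> b" using ba a_in b_in by (simp add: m_assoc)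
  also have "\<dots> = a [^] (Suc k * (m - 1)) \<otimes> b" using a_in by (simp add: nat_pow_mult add.commute)
  finally show ?case .
qed

lemma bjak: "b [^] j \<otimes> a [^] k = a [^] (k * (m - 1) ^ j) \<otimes> b [^] j"
proof (induction j arbitrary: k)
  case 0 then show ?case using a_in by simp
next
  case (Suc j)
  have "b [^] Suc j \<otimes> a [^] k = b [^] j \<otimes> (b \<otimes> a [^] k)" using a_in b_in by (simp add: m_assoc nat_pow_Suc2)
  also have "\<dots> = b [^] j \<otimes> a [^] (k * (m - 1)) \<otimes> b" using a_in b_in by (simp add: m_assoc bak)
  also have "\<dots> = a [^] (k * (m - 1) * (m - 1) ^ j) \<otimes> b [^] j \<otimes> b" using Suc by simp
  also have "\<dots> = a [^] (k * (m - 1) ^ Suc j) \<otimes> b [^] Suc j" using a_in b_in by (simp add: m_assoc mult.assoc)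
  finally show ?case .
qed

lemma phi_mult: "phi i j \<otimes> phi k l = phi (i + k * (m - 1) ^ j) (j + l)"
proof -
  have "phi i j \<otimes> phi k l = a [^] i \<otimes> (b [^] j \<otimes> a [^] k) \<otimes> b [^] l"
    using a_in b_in by (simp add: phi_def m_assoc)
  also have "\<dots> = a [^] i \<otimes> a [^] (k * (m - 1) ^ j) \<otimes> (b [^] j \<otimes> b [^] l)"
    using a_in b_in by (simp add: bjak m_assoc)
  also have "\<dots> = phi (i + k * (m - 1) ^ j) (j + l)"
    using a_in b_in by (simp add: phi_def nat_pow_mult)
  finally show ?thesis .
qed

lemma phi_mod: "phi i j = phi (i mod m) (j mod (2 * n))"
proof -
  have "a [^] i = a [^] (i mod m)" by (rule pow_mod_gen[OF a_in am])
  moreover have "b [^] j = b [^] (j mod (2 * n))" by (rule pow_mod_gen[OF b_in bn])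
  ultimately show ?thesis unfolding phi_def by simp
qed

definition D where "D = {..<m} \<times> {..<2 * n}"

lemma phi_in_image: "phi i j \<in> (\<lambda>(i, j). phi i j) ` D"
proof -
  have "(i mod m, j mod (2*n)) \<in> D" using m_gt n_ge by (auto simp: D_def)
  hence "phi (i mod m) (j mod (2*n)) \<in> (\<lambda>(i, j). phi i j) ` D" by (rule rev_image_eqI) simp
  thus ?thesis using phi_mod[of i j] by simp
qed

lemma carrier_sub: "carrier G \<subseteq> (\<lambda>(i, j). phi i j) ` D"
proof
  fix x assume "x \<in> carrier G"
  hence "x \<in> generate G {a, b}" using gen by simp
  then show "x \<in> (\<lambda>(i, j). phi i j) ` D"
  proof (induction rule: generate.induct)
    have "phi 0 0 = \<one>" by (simp add: phi_def)
    then show "\<one> \<in> (\<lambda>(i, j). phi i j) ` D" using phi_in_image[of 0 0] by simp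
  next
    case (incl h)
    have "a = phi 1 0" "b = phi 0 1" using a_in b_in by (auto simp: phi_def)
    with incl have "h = phi 1 0 \<or> h = phi 0 1" by auto
    then show ?case using phi_in_image[of 1 0] phi_in_image[of 0 1] by blast
  next
    case (inv h)
    have "inv a = phi (m - 1) 0" "inv b = phi 0 (2 * n - 1)" using a_in b_in inv_a inv_b by (auto simp: phi_def)
    with inv have "inv h = phi (m - 1) 0 \<or> inv h = phi 0 (2 * n - 1)" by auto
    then show ?case
    proof (elim disjE)
      assume "inv h = phi (m - 1) 0" thus ?case using phi_in_image[of "m - 1" 0] by (simp only:)
    next
      assume "inv h = phi 0 (2 * n - 1)" thus ?case using phi_in_image[of 0 "2 * n - 1"] by (simp only:)
    qed
  next
    case (eng h1 h2)
    then obtain i j k l where "h1 = phi i j" "h2 = phi k l" by auto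
    hence "h1 \<otimes> h2 = phi (i + k * (m - 1) ^ j) (j + l)" using phi_mult by simp
    then show ?case using phi_in_image[of "i + k * (m - 1) ^ j" "j + l"] by simp
  qed
qed

lemma card_D: "card D = 2 * m * n" by (simp add: D_def card_cartesian_product)

lemma phi_image: "(\<lambda>(i, j). phi i j) ` D = carrier G"
  using carrier_sub by auto

lemma phi_inj: "inj_on (\<lambda>(i, j). phi i j) D"
proof (rule eq_card_imp_inj_on)
  show "finite D" by (simp add: D_def)
  show "card ((\<lambda>(i, j). phi i j) ` D) = card D" by (simp add: phi_image cardG card_D)
qed

lemma phi_eq_iff: "phi i j = phi k l \<longleftrightarrow> i mod m = k mod m \<and> j mod (2 * n) = l mod (2 * n)"
proof
  assume "phi i j = phi k l"
  hence "phi (i mod m) (j mod (2*n)) = phi (k mod m) (l mod (2*n))" using phi_mod by metis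
  moreover have "(i mod m, j mod (2*n)) \<in> D" "(k mod m, l mod (2*n)) \<in> D" using m_gt n_ge by (auto simp: D_def)
  ultimately have "(i mod m, j mod (2*n)) = (k mod m, l mod (2*n))"
    using inj_onD[OF phi_inj] by fastforce
  then show "i mod m = k mod m \<and> j mod (2 * n) = l mod (2 * n)" by simp
next
  assume "i mod m = k mod m \<and> j mod (2 * n) = l mod (2 * n)"
  then show "phi i j = phi k l" using phi_mod by metis
qed


lemma pm1: "(int m - 1) ^ j mod int m = (-1) ^ j mod int m"
proof -
  have "(int m - 1) mod int m = (-1) mod int m" by (simp add: mod_eq_dvd_iff)
  hence "((int m - 1) mod int m) ^ j mod int m = ((-1) mod int m) ^ j mod int m" by simp
  thus ?thesis by (simp only: power_mod)
qed

lemma int_expr: "int (i + k * (m - 1) ^ j) mod int m = (int i + int k * (-1) ^ j) mod int m"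
proof -
  have "int (i + k * (m - 1) ^ j) = int i + int k * (int m - 1) ^ j" using m_gt by (simp add: of_nat_diff)
  hence "int (i + k * (m - 1) ^ j) mod int m = (int i + int k * (int m - 1) ^ j) mod int m"
    by (simp only:)
  also have "\<dots> = (int i + int k * ((int m - 1) ^ j mod int m)) mod int m"
    by (rule mod_inner[symmetric])
  also have "\<dots> = (int i + int k * ((-1) ^ j mod int m)) mod int m" by (simp only: pm1)
  also have "\<dots> = (int i + int k * (-1) ^ j) mod int m" by (rule mod_inner)
  finally show ?thesis .
qed

definition cm :: "nat \<Rightarrow> nat \<Rightarrow> nat \<Rightarrow> nat \<Rightarrow> bool" where
  "cm i j k l = (if even j \<and> even l then True else if even j then i = 0 else if even l then k = 0 else i = k)"

lemma phi_comm: assumes "i < m" "k < m"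
  shows "phi i j \<otimes> phi k l = phi k l \<otimes> phi i j \<longleftrightarrow> cm i j k l"
proof -
  have "phi i j \<otimes> phi k l = phi k l \<otimes> phi i j \<longleftrightarrow> (i + k * (m - 1) ^ j) mod m = (k + i * (m - 1) ^ l) mod m"
    by (simp add: phi_mult phi_eq_iff add.commute)
  also have "\<dots> \<longleftrightarrow> int (i + k * (m - 1) ^ j) mod int m = int (k + i * (m - 1) ^ l) mod int m"
    by (metis of_nat_eq_iff zmod_int)
  also have "\<dots> \<longleftrightarrow> (int i + int k * (-1)^j) mod int m = (int k + int i * (-1)^l) mod int m"
    by (simp only: int_expr)
  also have "\<dots> \<longleftrightarrow> cm i j k l" unfolding cm_def by (rule cm_int[OF m_odd assms])
  finally show ?thesis .
qed


definition Vp :: "(nat \<times> nat) set" where "Vp = {(i, j). i < m \<and> j < 2 * n \<and> (i \<noteq> 0 \<or> odd j)}"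
definition colr :: "nat \<times> nat \<Rightarrow> nat option" where "colr x = (if even (snd x) then None else Some (fst x))"
definition ph :: "nat \<times> nat \<Rightarrow> 'g" where "ph x = phi (fst x) (snd x)"

lemma ph_D: "(\<lambda>(i, j). phi i j) = ph" by (auto simp: ph_def)

lemma carrier_ph: "carrier G = ph ` D" using phi_image ph_D by simp

lemma ph_inj: "inj_on ph D" using phi_inj ph_D by simp

lemma Vp_D: "Vp \<subseteq> D" by (auto simp: Vp_def D_def)

lemma centre_iff: assumes "x \<in> D" shows "ph x \<in> group_centre G \<longleftrightarrow> fst x = 0 \<and> even (snd x)"
proof
  assume c: "ph x \<in> group_centre G"
  obtain i j where x: "x = (i, j)" by fastforce
  have i: "i < m" using assms x by (auto simp: D_def)
  have "phi i j \<otimes> phi 1 0 = phi 1 0 \<otimes> phi i j" using c x by (auto simp: group_centre_def ph_def)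
  hence "cm i j 1 0" using phi_comm[OF i, of 1 j 0] m_gt by simp
  hence ej: "even j" by (auto simp: cm_def split: if_splits)
  have "phi i j \<otimes> phi 0 1 = phi 0 1 \<otimes> phi i j" using c x by (auto simp: group_centre_def ph_def)
  hence "cm i j 0 1" using phi_comm[OF i, of 0 j 1] m_gt by simp
  hence "i = 0" using ej by (auto simp: cm_def)
  thus "fst x = 0 \<and> even (snd x)" using ej x by simp
next
  assume z: "fst x = 0 \<and> even (snd x)"
  obtain i j where x: "x = (i, j)" by fastforce
  have i: "i < m" using assms x by (auto simp: D_def)
  have "ph x \<otimes> g = g \<otimes> ph x" if "g \<in> carrier G" for g
  proof -
    have "g \<in> ph ` D" using that carrier_ph by simp
    then obtain y where y: "y \<in> D" "g = ph y" by blast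
    obtain k l where yy: "y = (k, l)" by fastforce
    have k: "k < m" using y yy by (auto simp: D_def)
    have "cm i j k l" using z x by (auto simp: cm_def)
    thus ?thesis using phi_comm[OF i k] x y yy by (simp add: ph_def)
  qed
  thus "ph x \<in> group_centre G" by (auto simp: group_centre_def ph_def)
qed

lemma ncv_iff: assumes "x \<in> D" shows "ph x \<in> nc_vertices G \<longleftrightarrow> x \<in> Vp"
  using centre_iff[OF assms] assms by (auto simp: nc_vertices_def ph_def Vp_def D_def)

lemma ncv_eq: "nc_vertices G = ph ` Vp"
proof
  show "nc_vertices G \<subseteq> ph ` Vp"
  proof
    fix u assume u: "u \<in> nc_vertices G"
    then obtain x where "x \<in> D" "u = ph x" using carrier_ph by (auto simp: nc_vertices_def)
    thus "u \<in> ph ` Vp" using ncv_iff u by auto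
  qed
  show "ph ` Vp \<subseteq> nc_vertices G" using ncv_iff Vp_D by auto
qed

lemma comm_colr: assumes "x \<in> Vp" "y \<in> Vp"
  shows "ph x \<otimes> ph y = ph y \<otimes> ph x \<longleftrightarrow> colr x = colr y"
proof -
  obtain i j k l where xy: "x = (i, j)" "y = (k, l)" by fastforce
  have ik: "i < m" "k < m" using assms xy by (auto simp: Vp_def)
  have "ph x \<otimes> ph y = ph y \<otimes> ph x \<longleftrightarrow> cm i j k l" using phi_comm[OF ik] xy by (simp add: ph_def)
  also have "\<dots> \<longleftrightarrow> colr x = colr y" using assms xy by (auto simp: cm_def colr_def Vp_def)
  finally show ?thesis .
qed

lemma ph_inj_Vp: "inj_on ph Vp" using ph_inj Vp_D inj_on_subset by blast

lemma adj_iff: assumes "x \<in> Vp" "y \<in> Vp"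
  shows "nc_adj G (ph x) (ph y) \<longleftrightarrow> x \<noteq> y \<and> colr x \<noteq> colr y"
proof -
  have "ph x \<noteq> ph y \<longleftrightarrow> x \<noteq> y" using ph_inj_Vp assms by (auto dest: inj_onD)
  thus ?thesis using comm_colr[OF assms] assms ncv_eq by (auto simp: nc_adj_def)
qed

lemma dist_Vp: assumes "x \<in> Vp" "y \<in> Vp"
  shows "graph_dist (nc_adj G) (ph x) (ph y) = (if x = y then 0 else if colr x = colr y then 2 else 1)"
proof -
  have ne: "ph x \<noteq> ph y" if "x \<noteq> y" using ph_inj_Vp assms that by (auto dest: inj_onD)
  show ?thesis
  proof (cases "x = y")
    case True then show ?thesis by (simp add: gd_0)
  next
    case False
    show ?thesis
    proof (cases "colr x = colr y")
      case c: True
      define w where "w = (if colr x = None then (0::nat, 1::nat) else (1, 0))"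
      have w: "w \<in> Vp" using m_gt n_ge by (auto simp: w_def Vp_def)
      have cw: "colr w \<noteq> colr x" by (auto simp: w_def colr_def)
      have "graph_dist (nc_adj G) (ph x) (ph y) = 2"
        by (rule gd_2[OF ne[OF False], where w = "ph w"])
           (use False c cw adj_iff[OF assms] adj_iff[OF assms(1) w] adj_iff[OF w assms(2)] in auto)
      then show ?thesis using False c by simp
    next
      case c: False
      have "graph_dist (nc_adj G) (ph x) (ph y) = 1"
        by (rule gd_1) (use False c adj_iff[OF assms] ne in auto)
      then show ?thesis using False c by simp
    qed
  qed
qed


definition Ev :: "nat set" where "Ev = {j. j < 2 * n \<and> even j}"
definition Od :: "nat set" where "Od = {j. j < 2 * n \<and> odd j}"

lemma card_Ev: "card Ev = n"
proof -
  have "Ev = (\<lambda>t. 2 * t) ` {..<n}" by (auto simp: Ev_def elim!: evenE)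
  moreover have "inj_on (\<lambda>t. 2 * t) {..<n}" by (auto simp: inj_on_def)
  ultimately show ?thesis by (simp add: card_image)
qed

lemma card_Od: "card Od = n"
proof -
  have "Od = (\<lambda>t. 2 * t + 1) ` {..<n}" by (auto simp: Od_def elim!: oddE)
  moreover have "inj_on (\<lambda>t. 2 * t + 1) {..<n}" by (auto simp: inj_on_def)
  ultimately show ?thesis by (simp add: card_image)
qed

lemma fin_Ev: "finite Ev" and fin_Od: "finite Od" by (auto simp: Ev_def Od_def)

lemma Vp_split: "Vp = ({1..<m} \<times> Ev) \<union> ({..<m} \<times> Od)"
  by (auto simp: Vp_def Ev_def Od_def)

lemma fin_Vp: "finite Vp" using Vp_D by (rule finite_subset) (simp add: D_def)

lemma card_Vp: "card Vp = n * (2 * m - 1)"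
proof -
  have "card Vp = card ({1..<m} \<times> Ev) + card ({..<m} \<times> Od)"
    unfolding Vp_split by (rule card_Un_disjoint) (auto simp: fin_Ev fin_Od Ev_def Od_def)
  also have "\<dots> = (m - 1) * n + m * n" by (simp add: card_cartesian_product card_Ev card_Od)
  also have "\<dots> = n * (2 * m - 1)" using m_gt by (simp add: algebra_simps diff_mult_distrib2)
  finally show ?thesis .
qed

lemma p_None: "card {w \<in> Vp. colr w = None} = (m - 1) * n"
proof -
  have "{w \<in> Vp. colr w = None} = {1..<m} \<times> Ev" by (auto simp: Vp_def Ev_def colr_def)
  thus ?thesis by (simp add: card_cartesian_product card_Ev)
qed

lemma p_Some: assumes "i < m" shows "card {w \<in> Vp. colr w = Some i} = n"
proof -
  have "{w \<in> Vp. colr w = Some i} = {i} \<times> Od" using assms by (auto simp: Vp_def Od_def colr_def split: if_splits)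
  thus ?thesis by (simp add: card_cartesian_product card_Od)
qed

lemma trans_Vp: assumes "x \<in> Vp"
  shows "(\<Sum>w\<in>nc_vertices G. real (graph_dist (nc_adj G) (ph x) w))
       = real (card Vp) + real (card {z \<in> Vp. colr z = colr x}) - 2"
proof -
  have "(\<Sum>w\<in>nc_vertices G. real (graph_dist (nc_adj G) (ph x) w)) = (\<Sum>z\<in>Vp. real (graph_dist (nc_adj G) (ph x) (ph z)))"
    unfolding ncv_eq by (rule sum.reindex[OF ph_inj_Vp, unfolded comp_def])
  also have "\<dots> = (\<Sum>z\<in>Vp. 1 + (if colr z = colr x then 1 else 0) - (if z = x then 2 else 0))"
    by (rule sum.cong) (use assms in \<open>auto simp: dist_Vp\<close>)
  also have "\<dots> = real (card Vp) + real (card {z \<in> Vp. colr z = colr x}) - 2"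
    using assms fin_Vp by (simp add: sum.distrib sum_subtractf sum.If_cases Int_def)
  finally show ?thesis .
qed


definition rho :: "nat option \<Rightarrow> nat \<times> nat" where
  "rho k = (case k of None \<Rightarrow> (1, 0) | Some i \<Rightarrow> (i, 1))"

lemma main:
  assumes e: "bij_betw e {..<card (nc_vertices G)} (nc_vertices G)"
  shows "char_poly (dist_laplacian_mat (nc_vertices G) (nc_adj G) e) =
           [:0, 1:]
         * [:- real (n * (2 * m - 1)), 1:] ^ m
         * [:- real (2 * m * n), 1:] ^ (m * (n - 1))
         * [:- real ((3 * m - 2) * n), 1:] ^ ((m - 1) * n - 1)"
proof -
  define V where "V = nc_vertices G"
  define N where "N = card Vp"
  define p where "p k = card {w \<in> Vp. colr w = k}" for k
  have bph: "bij_betw ph Vp V" unfolding V_def ncv_eq by (rule bij_betw_imageI[OF ph_inj_Vp refl])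
  have cV: "card V = N" using bph N_def bij_betw_same_card by fastforce
  define e' where "e' i = inv_into Vp ph (e i)" for i
  have be': "bij_betw e' {..<N} Vp"
  proof -
    have "bij_betw (inv_into Vp ph \<circ> e) {..<N} Vp"
      by (rule bij_betw_trans[OF e[folded V_def, unfolded cV] bij_betw_inv_into[OF bph]])
    moreover have "e' = inv_into Vp ph \<circ> e" by (rule ext) (simp add: e'_def)
    ultimately show ?thesis by simp
  qed
  have phe: "ph (e' i) = e i" if "i < N" for i
  proof -
    have "e i \<in> ph ` Vp" using e that cV unfolding V_def ncv_eq by (auto simp: bij_betw_def)
    thus ?thesis unfolding e'_def by (rule f_inv_into_f)
  qed
  define L where "L x y = dist_laplacian V (nc_adj G) (ph x) (ph y)" for x y
  have M: "dist_laplacian_mat V (nc_adj G) e = mat N N (\<lambda>(i, j). L (e' i) (e' j))"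
    unfolding dist_laplacian_mat_def cV by (rule eq_matI) (auto simp: L_def phe)
  have Lf: "L x y = (if x = y then real N + real (p (colr x)) else 0) - 1 - (if colr x = colr y then 1 else 0)"
    if "x \<in> Vp" "y \<in> Vp" for x y
  proof -
    have eq: "ph x = ph y \<longleftrightarrow> x = y" using ph_inj_Vp that by (auto dest: inj_onD)
    show ?thesis unfolding L_def dist_laplacian_def eq V_def
      using trans_Vp[OF that(1)] dist_Vp[OF that] by (cases "x = y") (simp_all add: N_def p_def)
  qed
  have rho_ok: "rho (colr u) \<in> Vp \<and> colr (rho (colr u)) = colr u" if "u \<in> Vp" for u
    using that m_gt n_ge by (auto simp: rho_def colr_def Vp_def)
  have u0: "(1, 0) \<in> Vp" "rho (colr (1, 0)) = (1, 0)" using m_gt n_ge by (auto simp: rho_def colr_def Vp_def)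
  have "char_poly (mat N N (\<lambda>(i, j). L (e' i) (e' j)))
     = (\<Prod>u\<in>Vp. [:- (if u = (1, 0) then 0 else if u = rho (colr u) then real N else real N + real (p (colr u))), 1:])"
    by (rule spectrum_multipartite[OF fin_Vp be' N_def rho_ok u0 p_def Lf])
  also have "\<dots> = [:0, 1:] * [:- real N, 1:] ^ m * [:- (real N + real ((m - 1) * n)), 1:] ^ ((m - 1) * n - 1)
                 * [:- (real N + real n), 1:] ^ (m * (n - 1))"
  proof -
    define f where "f u = [:- (if u = (1, 0) then 0 else if u = rho (colr u) then real N else real N + real (p (colr u))), 1:]" for u
    define S0 where "S0 = {(1::nat, 0::nat)}"
    define S1 where "S1 = (\<lambda>i. (i, 1::nat)) ` {..<m}"
    define S2 where "S2 = {1..<m} \<times> Ev - {(1, 0)}"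
    define S3 where "S3 = {..<m} \<times> (Od - {1})"
    have VpS: "Vp = S0 \<union> (S1 \<union> (S2 \<union> S3))"
      unfolding Vp_split S0_def S1_def S2_def S3_def using m_gt n_ge
      by (auto simp: Ev_def Od_def)
    have fS: "finite S0" "finite S1" "finite S2" "finite S3"
      by (auto simp: S0_def S1_def S2_def S3_def fin_Ev fin_Od)
    have dj: "S0 \<inter> (S1 \<union> (S2 \<union> S3)) = {}" "S1 \<inter> (S2 \<union> S3) = {}" "S2 \<inter> S3 = {}"
      by (auto simp: S0_def S1_def S2_def S3_def Ev_def Od_def)
    have pN: "p None = (m - 1) * n" using p_None by (simp add: p_def)
    have pS: "p (Some i) = n" if "i < m" for i using p_Some[OF that] by (simp add: p_def)
    have P0: "prod f S0 = [:0, 1:]" by (simp add: S0_def f_def)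
    have P1: "prod f S1 = [:- real N, 1:] ^ m"
    proof -
      have "prod f S1 = prod (\<lambda>_. [:- real N, 1:]) S1"
        by (rule prod.cong) (auto simp: S1_def f_def rho_def colr_def)
      moreover have "card S1 = m" unfolding S1_def by (subst card_image) (auto simp: inj_on_def)
      ultimately show ?thesis by simp
    qed
    have P2: "prod f S2 = [:- (real N + real ((m - 1) * n)), 1:] ^ ((m - 1) * n - 1)"
    proof -
      have "prod f S2 = prod (\<lambda>_. [:- (real N + real ((m - 1) * n)), 1:]) S2"
        by (rule prod.cong) (use pN in \<open>auto simp: S2_def f_def rho_def colr_def Ev_def\<close>)
      moreover have "card S2 = (m - 1) * n - 1"
      proof -
        have "(1, 0) \<in> {1..<m} \<times> Ev" using m_gt n_ge by (auto simp: Ev_def)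
        thus ?thesis unfolding S2_def by (simp add: card_cartesian_product card_Ev fin_Ev)
      qed
      ultimately show ?thesis by simp
    qed
    have P3: "prod f S3 = [:- (real N + real n), 1:] ^ (m * (n - 1))"
    proof -
      have "prod f S3 = prod (\<lambda>_. [:- (real N + real n), 1:]) S3"
        by (rule prod.cong) (use pS in \<open>auto simp: S3_def f_def rho_def colr_def Od_def\<close>)
      moreover have "card S3 = m * (n - 1)"
      proof -
        have "1 \<in> Od" using n_ge by (auto simp: Od_def)
        thus ?thesis unfolding S3_def by (simp add: card_cartesian_product card_Od fin_Od)
      qed
      ultimately show ?thesis by simp
    qed
    have "prod f Vp = prod f S0 * (prod f S1 * (prod f S2 * prod f S3))"
      unfolding VpS using fS dj
      by (simp add: prod.union_disjoint)
    thus ?thesis unfolding f_def[symmetric] P0 P1 P2 P3 by (simp only: ac_simps)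
  qed
  also have "\<dots> = [:0, 1:]
         * [:- real (n * (2 * m - 1)), 1:] ^ m
         * [:- real (2 * m * n), 1:] ^ (m * (n - 1))
         * [:- real ((3 * m - 2) * n), 1:] ^ ((m - 1) * n - 1)"
  proof -
    have "N + (m - 1) * n = (3 * m - 2) * n" "N + n = 2 * m * n" "N = n * (2 * m - 1)"
      using m_gt unfolding N_def card_Vp by (auto simp: algebra_simps diff_mult_distrib2 diff_mult_distrib)
    hence "real N + real ((m - 1) * n) = real ((3 * m - 2) * n)" "real N + real n = real (2 * m * n)"
      "real N = real (n * (2 * m - 1))" by (metis of_nat_add)+
    hence A: "[:- real N, 1:] = [:- real (n * (2 * m - 1)), 1:]"
      and B: "[:- (real N + real ((m - 1) * n)), 1:] = [:- real ((3 * m - 2) * n), 1:]"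
      and C: "[:- (real N + real n), 1:] = [:- real (2 * m * n), 1:]" by simp_all
    show ?thesis unfolding A B C by (simp only: ac_simps)
  qed
  finally show ?thesis using M unfolding V_def by simp
qed

end

theorem theorem6p3:
  fixes G :: "('g, 'b) monoid_scheme" and a b :: 'g and m n :: nat
    and e :: "nat \<Rightarrow> 'g"
  assumes "group G"
    and "odd m" and "m > 2" and "n \<ge> 1"
    and "a \<in> carrier G" and "b \<in> carrier G"
    and "a [^]\<^bsub>G\<^esub> m = \<one>\<^bsub>G\<^esub>" and "b [^]\<^bsub>G\<^esub> (2 * n) = \<one>\<^bsub>G\<^esub>"
    and "b \<otimes>\<^bsub>G\<^esub> a \<otimes>\<^bsub>G\<^esub> inv\<^bsub>G\<^esub> b = inv\<^bsub>G\<^esub> a"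
    and "generate G {a, b} = carrier G"
    and "finite (carrier G)" and "card (carrier G) = 2 * m * n"
    and "bij_betw e {..<card (nc_vertices G)} (nc_vertices G)"
  shows "char_poly (dist_laplacian_mat (nc_vertices G) (nc_adj G) e) =
           [:0, 1:]
         * [:- real (n * (2 * m - 1)), 1:] ^ m
         * [:- real (2 * m * n), 1:] ^ (m * (n - 1))
         * [:- real ((3 * m - 2) * n), 1:] ^ ((m - 1) * n - 1)"
proof -
  interpret metacyc G a b m n
    by (rule metacyc.intro[OF assms(1)], unfold_locales) (use assms in auto)
  show ?thesis by (rule main[OF assms(13)])
qed

end
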